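(* Let $k$ be a field, let $A$ be a finite-dimensional (associative) $k$-algebra, and let $I$ be a two-sided ideal of $A$. Then $\mathrm{SR}(A/I)\le \mathrm{SR}(A)$.
   Context: For a finite-dimensional $k$-algebra $A$ with basis $e_1,\dots,e_n$ and dual basis $e_1^*,\dots,e_n^*$, its multiplication tensor is $T_A=\sum_{1\le i,j\le n} e_i^*\otimes e_j^*\otimes (e_i e_j)\in A^*\otimes A^*\otimes A$, viewed as a trilinear form on $A\times A\times A^*$. $\mathrm{SR}(A)$ denotes the slice rank of $T_A$. The slice rank of a tensor $T\in U_1\otimes U_2\otimes U_3$ is the smallest $r$ such that $T$ is a sum of $r$ tensors each of the form $u\otimes S$ with $u\in U_1, S\in U_2\otimes U_3$, or $u\in U_2$ times an element of $U_1\otimes U_3$ (suitably placed), or $u\in U_3$ times an element of $U_1\otimes U_2$ (suitably placed). *)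

theory Defs
  imports Complex_Main
begin

type_synonym ('k, 'u) vsp = "'u set \<times> ('u \<Rightarrow> 'u \<Rightarrow> 'u) \<times> ('k \<Rightarrow> 'u \<Rightarrow> 'u)"

definition vcar :: "('k, 'u) vsp \<Rightarrow> 'u set" where "vcar V = fst V"
definition vadd :: "('k, 'u) vsp \<Rightarrow> 'u \<Rightarrow> 'u \<Rightarrow> 'u" where "vadd V = fst (snd V)"
definition vscale :: "('k, 'u) vsp \<Rightarrow> 'k \<Rightarrow> 'u \<Rightarrow> 'u" where "vscale V = snd (snd V)"

definition lin_on :: "('k::field, 'u) vsp \<Rightarrow> ('u \<Rightarrow> 'k) \<Rightarrow> bool" where
  "lin_on V f \<longleftrightarrow>
     (\<forall>x\<in>vcar V. \<forall>y\<in>vcar V. f (vadd V x y) = f x + f y) \<and>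
     (\<forall>c. \<forall>x\<in>vcar V. f (vscale V c x) = c * f x)"

definition bilin_on :: "('k::field, 'u) vsp \<Rightarrow> ('k, 'v) vsp \<Rightarrow> ('u \<Rightarrow> 'v \<Rightarrow> 'k) \<Rightarrow> bool" where
  "bilin_on U V g \<longleftrightarrow>
     (\<forall>y\<in>vcar V. lin_on U (\<lambda>x. g x y)) \<and> (\<forall>x\<in>vcar U. lin_on V (g x))"

text \<open>The dual space V*: linear functionals, normalised to 0 outside the carrier (extensional).\<close>
definition dual :: "('k::field, 'u) vsp \<Rightarrow> ('k, 'u \<Rightarrow> 'k) vsp" where
  "dual V = ({f. lin_on V f \<and> (\<forall>x. x \<notin> vcar V \<longrightarrow> f x = 0)},
             (\<lambda>f g x. f x + g x),
             (\<lambda>c f x. c * f x))"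

definition slice_rank_le ::
  "('k::field, 'u) vsp \<Rightarrow> ('k, 'v) vsp \<Rightarrow> ('k, 'w) vsp \<Rightarrow> ('u \<Rightarrow> 'v \<Rightarrow> 'w \<Rightarrow> 'k) \<Rightarrow> nat \<Rightarrow> bool" where
  "slice_rank_le U1 U2 U3 T r \<longleftrightarrow>
     (\<exists>n1 n2 n3 f1 g1 f2 g2 f3 g3.
        n1 + n2 + n3 \<le> r \<and>
        (\<forall>i<n1. lin_on U1 (f1 i) \<and> bilin_on U2 U3 (g1 i)) \<and>
        (\<forall>i<n2. lin_on U2 (f2 i) \<and> bilin_on U1 U3 (g2 i)) \<and>
        (\<forall>i<n3. lin_on U3 (f3 i) \<and> bilin_on U1 U2 (g3 i)) \<and>
        (\<forall>x\<in>vcar U1. \<forall>y\<in>vcar U2. \<forall>z\<in>vcar U3.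
           T x y z = (\<Sum>i<n1. f1 i x * g1 i y z) + (\<Sum>i<n2. f2 i y * g2 i x z)
                     + (\<Sum>i<n3. f3 i z * g3 i x y)))"

definition slice_rank ::
  "('k::field, 'u) vsp \<Rightarrow> ('k, 'v) vsp \<Rightarrow> ('k, 'w) vsp \<Rightarrow> ('u \<Rightarrow> 'v \<Rightarrow> 'w \<Rightarrow> 'k) \<Rightarrow> nat" where
  "slice_rank U1 U2 U3 T = (LEAST r. slice_rank_le U1 U2 U3 T r)"

text \<open>SR of an algebra (V, mul): slice rank of its multiplication tensor, viewed as the
  trilinear form (x, y, \<phi>) \<mapsto> \<phi>(x y) on A \<times> A \<times> A*.\<close>
definition SR_alg :: "('k::field, 'u) vsp \<Rightarrow> ('u \<Rightarrow> 'u \<Rightarrow> 'u) \<Rightarrow> nat" where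
  "SR_alg V mul = slice_rank V V (dual V) (\<lambda>x y \<phi>. \<phi> (mul x y))"

definition fd_algebra :: "('k::field \<Rightarrow> 'a::ring \<Rightarrow> 'a) \<Rightarrow> bool" where
  "fd_algebra s \<longleftrightarrow>
     (\<exists>B. finite_dimensional_vector_space s B) \<and>
     (\<forall>c x y. s c (x * y) = s c x * y \<and> s c (x * y) = x * s c y)"

definition alg_space :: "('k::field \<Rightarrow> 'a::ring \<Rightarrow> 'a) \<Rightarrow> ('k, 'a) vsp" where
  "alg_space s = (UNIV, (+), s)"

definition SR :: "('k::field \<Rightarrow> 'a::ring \<Rightarrow> 'a) \<Rightarrow> nat" where
  "SR s = SR_alg (alg_space s) (*)"

definition two_sided_ideal :: "('k::field \<Rightarrow> 'a::ring \<Rightarrow> 'a) \<Rightarrow> 'a set \<Rightarrow> bool" where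
  "two_sided_ideal s I \<longleftrightarrow> module.subspace s I \<and> (\<forall>a\<in>I. \<forall>x. x * a \<in> I \<and> a * x \<in> I)"

text \<open>The quotient algebra A/I, realised on the cosets a + I.\<close>
definition quot_space :: "('k::field \<Rightarrow> 'a::ring \<Rightarrow> 'a) \<Rightarrow> 'a set \<Rightarrow> ('k, 'a set) vsp" where
  "quot_space s I =
     ({{y. y - a \<in> I} | a. True},
      (\<lambda>X Y. {z. \<exists>x\<in>X. \<exists>y\<in>Y. z - (x + y) \<in> I}),
      (\<lambda>c X. {z. \<exists>x\<in>X. z - s c x \<in> I}))"

definition quot_mult :: "'a::ring set \<Rightarrow> 'a set \<Rightarrow> 'a set \<Rightarrow> 'a set" where
  "quot_mult I X Y = {z. \<exists>x\<in>X. \<exists>y\<in>Y. z - x * y \<in> I}"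

definition SR_quot :: "('k::field \<Rightarrow> 'a::ring \<Rightarrow> 'a) \<Rightarrow> 'a set \<Rightarrow> nat" where
  "SR_quot s I = SR_alg (quot_space s I) (quot_mult I)"

end

theory Submission
  imports Defs
begin

lemma proj_exists:
  fixes s :: "'k::field \<Rightarrow> 'a::ring \<Rightarrow> 'a"
  assumes vs: "vector_space s" and sub: "module.subspace s I"
  shows "\<exists>p. (\<forall>x y. p (x + y) = p x + p y) \<and> (\<forall>c x. p (s c x) = s c (p x))
           \<and> (\<forall>x\<in>I. p x = 0) \<and> (\<forall>a. a - p a \<in> I)"
proof -
  interpret vector_space s by (rule vs)
  interpret vp: vector_space_pair s s by unfold_locales
  obtain B where B: "B \<subseteq> I" "independent B" "I \<subseteq> span B"
    by (rule maximal_independent_subset)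
  obtain E where E0: "B \<subseteq> E" "E \<subseteq> UNIV" "independent E" "UNIV \<subseteq> span E"
    by (rule maximal_independent_subset_extend[OF subset_UNIV B(2)])
  note E = E0(1,3,4)
  define p where "p = vp.construct E (\<lambda>b. if b \<in> B then 0 else b)"
  have lin: "Vector_Spaces.linear s s p" unfolding p_def by (rule vp.linear_construct[OF E(2)])
  hence padd: "\<forall>x y. p (x + y) = p x + p y" and psc: "\<forall>c x. p (s c x) = s c (p x)"
    using vp.linear_add[OF lin] vp.linear_scale[OF lin] by auto
  have pb: "b \<in> E \<Longrightarrow> p b = (if b \<in> B then 0 else b)" for b
    unfolding p_def by (rule vp.construct_basis[OF E(2)])
  have p0: "p 0 = 0" using padd by (metis add_cancel_right_right)
  have s1: "subspace {x. p x = 0}"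
    unfolding subspace_def using padd psc p0 by auto
  have "span B \<subseteq> {x. p x = 0}"
    by (rule span_minimal[OF _ s1]) (use B E pb in auto)
  hence k: "\<forall>x\<in>I. p x = 0" using B by auto
  have s2: "subspace {a. a - p a \<in> I}"
    unfolding subspace_def
  proof (intro conjI ballI allI)
    show "0 \<in> {a. a - p a \<in> I}" using p0 subspace_0[OF sub] by simp
  next
    fix x y assume "x \<in> {a. a - p a \<in> I}" "y \<in> {a. a - p a \<in> I}"
    hence "(x - p x) + (y - p y) \<in> I" using subspace_add[OF sub] by auto
    thus "x + y \<in> {a. a - p a \<in> I}" using padd by (simp add: algebra_simps)
  next
    fix c x assume "x \<in> {a. a - p a \<in> I}"
    hence "s c (x - p x) \<in> I" using subspace_scale[OF sub] by auto
    thus "s c x \<in> {a. a - p a \<in> I}" using psc by (simp add: scale_right_diff_distrib)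
  qed
  have "span E \<subseteq> {a. a - p a \<in> I}"
    by (rule span_minimal[OF _ s2]) (use B E pb subspace_0[OF sub] in auto)
  hence "\<forall>a. a - p a \<in> I" using E by auto
  thus ?thesis using padd psc k by blast
qed
locale qctx = vector_space s for s :: "'k::field \<Rightarrow> 'a::ring \<Rightarrow> 'a" +
  fixes I :: "'a set" and p :: "'a \<Rightarrow> 'a"
  assumes ideal: "two_sided_ideal s I"
  and p_add: "p (x + y) = p x + p y" and p_scale: "p (s c x) = s c (p x)"
  and p_I: "x \<in> I \<Longrightarrow> p x = 0" and p_res: "a - p a \<in> I"
begin

definition cls :: "'a \<Rightarrow> 'a set" where "cls a = {y. y - a \<in> I}"
definition sig :: "'a set \<Rightarrow> 'a" where "sig X = p (SOME x. x \<in> X)"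
definition rho :: "('a set \<Rightarrow> 'k) \<Rightarrow> 'a \<Rightarrow> 'k" where "rho F = (\<lambda>a. F (cls a))"

abbreviation "Q \<equiv> quot_space s I"
abbreviation "AA \<equiv> alg_space s"

lemma subI: "subspace I" using ideal unfolding two_sided_ideal_def by simp
lemma I0: "0 \<in> I" by (rule subspace_0[OF subI])
lemma Iadd: "x \<in> I \<Longrightarrow> y \<in> I \<Longrightarrow> x + y \<in> I" by (rule subspace_add[OF subI])
lemma Idiff: "x \<in> I \<Longrightarrow> y \<in> I \<Longrightarrow> x - y \<in> I" by (rule subspace_diff[OF subI])
lemma Ineg: "x \<in> I \<Longrightarrow> - x \<in> I" by (rule subspace_neg[OF subI])
lemma Iscale: "x \<in> I \<Longrightarrow> s c x \<in> I" by (rule subspace_scale[OF subI])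
lemma Ileft: "x \<in> I \<Longrightarrow> y * x \<in> I" using ideal unfolding two_sided_ideal_def by blast
lemma Iright: "x \<in> I \<Longrightarrow> x * y \<in> I" using ideal unfolding two_sided_ideal_def by blast

lemma p0: "p 0 = 0" using p_add[of 0 0] by simp
lemma pdiff: "p (x - y) = p x - p y"
  using p_add[of "x - y" y] by (simp add: algebra_simps)

lemma cls_mem: "a \<in> cls a" unfolding cls_def using I0 by simp

lemma cls_eq: "a - b \<in> I \<Longrightarrow> cls a = cls b"
proof -
  assume h: "a - b \<in> I"
  have "y - a \<in> I \<longleftrightarrow> y - b \<in> I" for y
  proof
    assume h1: "y - a \<in> I"
    have "y - b = (y - a) + (a - b)" by simp
    thus "y - b \<in> I" using Iadd[OF h1 h] by simp
  next
    assume h1: "y - b \<in> I"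
    have "y - a = (y - b) - (a - b)" by simp
    thus "y - a \<in> I" using Idiff[OF h1 h] by simp
  qed
  thus ?thesis unfolding cls_def by auto
qed

lemma sig_cls: "sig (cls a) = p a"
proof -
  have "(SOME x. x \<in> cls a) \<in> cls a" using cls_mem by (rule someI)
  hence "(SOME x. x \<in> cls a) - a \<in> I" unfolding cls_def by simp
  hence "p ((SOME x. x \<in> cls a) - a) = 0" by (rule p_I)
  thus ?thesis unfolding sig_def pdiff by simp
qed

lemma vcarQ: "vcar Q = range cls"
  unfolding quot_space_def vcar_def cls_def by auto

lemma cls_sig: "X \<in> vcar Q \<Longrightarrow> cls (sig X) = X"
proof -
  assume "X \<in> vcar Q"
  then obtain a where X: "X = cls a" using vcarQ by auto
  have "p a - a \<in> I" using Ineg[OF p_res[of a]] by simp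
  thus ?thesis unfolding X sig_cls by (rule cls_eq)
qed

lemma vaddQ: "vadd Q (cls a) (cls b) = cls (a + b)"
proof -
  have "(\<exists>x\<in>cls a. \<exists>y\<in>cls b. z - (x + y) \<in> I) \<longleftrightarrow> z - (a + b) \<in> I" for z
  proof
    assume "\<exists>x\<in>cls a. \<exists>y\<in>cls b. z - (x + y) \<in> I"
    then obtain x y where h1: "x - a \<in> I" and h2: "y - b \<in> I" and h3: "z - (x + y) \<in> I" unfolding cls_def by auto
    have "(z - (x + y)) + (x - a) + (y - b) \<in> I" using Iadd[OF Iadd[OF h3 h1] h2] .
    thus "z - (a + b) \<in> I" by (simp add: algebra_simps)
  next
    assume "z - (a + b) \<in> I" thus "\<exists>x\<in>cls a. \<exists>y\<in>cls b. z - (x + y) \<in> I"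
      using cls_mem by blast
  qed
  thus ?thesis unfolding quot_space_def vadd_def by (auto simp: cls_def[of "a+b"])
qed

lemma vscaleQ: "vscale Q c (cls a) = cls (s c a)"
proof -
  have "(\<exists>x\<in>cls a. z - s c x \<in> I) \<longleftrightarrow> z - s c a \<in> I" for z
  proof
    assume "\<exists>x\<in>cls a. z - s c x \<in> I"
    then obtain x where h1: "x - a \<in> I" and h2: "z - s c x \<in> I" unfolding cls_def by auto
    have "(z - s c x) + s c (x - a) \<in> I" using Iadd[OF h2 Iscale[OF h1]] .
    thus "z - s c a \<in> I" by (simp add: algebra_simps scale_right_diff_distrib)
  next
    assume "z - s c a \<in> I" thus "\<exists>x\<in>cls a. z - s c x \<in> I"
      using cls_mem by blast
  qed
  thus ?thesis unfolding quot_space_def vscale_def by (auto simp: cls_def[of "s c a"])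
qed

lemma multQ: "quot_mult I (cls a) (cls b) = cls (a * b)"
proof -
  have "(\<exists>x\<in>cls a. \<exists>y\<in>cls b. z - x * y \<in> I) \<longleftrightarrow> z - a * b \<in> I" for z
  proof
    assume "\<exists>x\<in>cls a. \<exists>y\<in>cls b. z - x * y \<in> I"
    then obtain x y where h1: "x - a \<in> I" and h2: "y - b \<in> I" and h3: "z - x * y \<in> I" unfolding cls_def by auto
    have "(z - x * y) + x * (y - b) + (x - a) * b \<in> I" using Iadd[OF Iadd[OF h3 Ileft[OF h2]] Iright[OF h1]] .
    thus "z - a * b \<in> I" by (simp add: algebra_simps)
  next
    assume "z - a * b \<in> I" thus "\<exists>x\<in>cls a. \<exists>y\<in>cls b. z - x * y \<in> I"
      using cls_mem by blast
  qed
  thus ?thesis unfolding quot_mult_def by (auto simp: cls_def[of "a*b"])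
qed


lemma AA_simps: "vcar AA = UNIV" "vadd AA = (+)" "vscale AA = s"
  unfolding alg_space_def vcar_def vadd_def vscale_def by simp_all

lemma dual_simps: "vcar (dual V) = {f. lin_on V f \<and> (\<forall>x. x \<notin> vcar V \<longrightarrow> f x = 0)}"
  "vadd (dual V) = (\<lambda>f g x. f x + g x)" "vscale (dual V) = (\<lambda>c f x. c * f x)"
  unfolding dual_def vcar_def vadd_def vscale_def by simp_all

lemma rho_dual: "\<Phi> \<in> vcar (dual Q) \<Longrightarrow> rho \<Phi> \<in> vcar (dual AA)"
proof -
  assume "\<Phi> \<in> vcar (dual Q)"
  hence L: "lin_on Q \<Phi>" by (simp add: dual_simps)
  have m: "cls a \<in> vcar Q" for a using vcarQ by auto
  have "lin_on AA (rho \<Phi>)"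
    unfolding lin_on_def AA_simps rho_def
  proof (intro conjI ballI allI)
    fix x y show "\<Phi> (cls (x + y)) = \<Phi> (cls x) + \<Phi> (cls y)"
      using L m unfolding lin_on_def by (metis vaddQ)
  next
    fix c x show "\<Phi> (cls (s c x)) = c * \<Phi> (cls x)"
      using L m unfolding lin_on_def by (metis vscaleQ)
  qed
  thus ?thesis by (simp add: dual_simps AA_simps)
qed

lemma lin_sig: "lin_on AA f \<Longrightarrow> lin_on Q (\<lambda>X. f (sig X))"
proof -
  assume L: "lin_on AA f"
  hence La: "f (x + y) = f x + f y" and Ls: "f (s c x) = c * f x" for x y c
    unfolding lin_on_def AA_simps by auto
  show ?thesis unfolding lin_on_def
  proof (intro conjI ballI allI)
    fix X Y assume "X \<in> vcar Q" "Y \<in> vcar Q"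
    then obtain a b where X: "X = cls a" and Y: "Y = cls b" using vcarQ by auto
    show "f (sig (vadd Q X Y)) = f (sig X) + f (sig Y)"
      unfolding X Y vaddQ sig_cls p_add La ..
  next
    fix c X assume "X \<in> vcar Q"
    then obtain a where X: "X = cls a" using vcarQ by auto
    show "f (sig (vscale Q c X)) = c * f (sig X)"
      unfolding X vscaleQ sig_cls p_scale Ls ..
  qed
qed

lemma lin_rho: "lin_on (dual AA) G \<Longrightarrow> lin_on (dual Q) (\<lambda>\<Phi>. G (rho \<Phi>))"
proof -
  assume L: "lin_on (dual AA) G"
  show ?thesis unfolding lin_on_def
  proof (intro conjI ballI allI)
    fix \<Phi> \<Psi> assume h: "\<Phi> \<in> vcar (dual Q)" "\<Psi> \<in> vcar (dual Q)"
    have e: "rho (vadd (dual Q) \<Phi> \<Psi>) = vadd (dual AA) (rho \<Phi>) (rho \<Psi>)"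
      by (simp add: dual_simps rho_def)
    show "G (rho (vadd (dual Q) \<Phi> \<Psi>)) = G (rho \<Phi>) + G (rho \<Psi>)"
      unfolding e using L rho_dual[OF h(1)] rho_dual[OF h(2)] unfolding lin_on_def by blast
  next
    fix c \<Phi> assume h: "\<Phi> \<in> vcar (dual Q)"
    have e: "rho (vscale (dual Q) c \<Phi>) = vscale (dual AA) c (rho \<Phi>)"
      by (simp add: dual_simps rho_def)
    show "G (rho (vscale (dual Q) c \<Phi>)) = c * G (rho \<Phi>)"
      unfolding e using L rho_dual[OF h] unfolding lin_on_def by blast
  qed
qed

lemma bilin1: assumes "bilin_on AA (dual AA) g" shows "bilin_on Q (dual Q) (\<lambda>Y \<Phi>. g (sig Y) (rho \<Phi>))"
proof -
  have a: "lin_on AA (\<lambda>x. g x y)" if "y \<in> vcar (dual AA)" for y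
    using assms that by (simp add: bilin_on_def)
  have b: "lin_on (dual AA) (g x)" for x using assms by (simp add: bilin_on_def AA_simps)
  show ?thesis unfolding bilin_on_def
  proof (intro conjI ballI)
    fix \<Phi> assume "\<Phi> \<in> vcar (dual Q)"
    from lin_sig[OF a[OF rho_dual[OF this]]] show "lin_on Q (\<lambda>x. g (sig x) (rho \<Phi>))" .
  next
    fix Y from lin_rho[OF b[of "sig Y"]] show "lin_on (dual Q) (\<lambda>\<Phi>. g (sig Y) (rho \<Phi>))" .
  qed
qed

lemma bilin3: assumes "bilin_on AA AA g" shows "bilin_on Q Q (\<lambda>X Y. g (sig X) (sig Y))"
proof -
  have a: "lin_on AA (\<lambda>x. g x y)" for y using assms by (simp add: bilin_on_def AA_simps)
  have b: "lin_on AA (g x)" for x using assms by (simp add: bilin_on_def AA_simps)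
  show ?thesis unfolding bilin_on_def
  proof (intro conjI ballI)
    fix Y from lin_sig[OF a[of "sig Y"]] show "lin_on Q (\<lambda>x. g (sig x) (sig Y))" .
  next
    fix X from lin_sig[OF b[of "sig X"]] show "lin_on Q (\<lambda>Y. g (sig X) (sig Y))" .
  qed
qed

lemma quot_decomp:
  assumes "slice_rank_le AA AA (dual AA) (\<lambda>x y \<phi>. \<phi> (x * y)) r"
  shows "slice_rank_le Q Q (dual Q) (\<lambda>X Y \<Phi>. \<Phi> (quot_mult I X Y)) r"
proof -
  obtain n1 n2 n3 f1 g1 f2 g2 f3 g3 where hn: "n1 + n2 + n3 \<le> r" and
    c1: "\<forall>i<n1. lin_on AA (f1 i) \<and> bilin_on AA (dual AA) (g1 i)" and
    c2: "\<forall>i<n2. lin_on AA (f2 i) \<and> bilin_on AA (dual AA) (g2 i)" and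
    c3: "\<forall>i<n3. lin_on (dual AA) (f3 i) \<and> bilin_on AA AA (g3 i)" and
    eq: "\<forall>x\<in>vcar AA. \<forall>y\<in>vcar AA. \<forall>z\<in>vcar (dual AA).
           z (x * y) = (\<Sum>i<n1. f1 i x * g1 i y z) + (\<Sum>i<n2. f2 i y * g2 i x z)
                     + (\<Sum>i<n3. f3 i z * g3 i x y)"
    using assms unfolding slice_rank_le_def by blast
  have d1: "\<forall>i<n1. lin_on Q (\<lambda>X. f1 i (sig X)) \<and> bilin_on Q (dual Q) (\<lambda>Y \<Phi>. g1 i (sig Y) (rho \<Phi>))"
    using c1 lin_sig bilin1 by blast
  have d2: "\<forall>i<n2. lin_on Q (\<lambda>X. f2 i (sig X)) \<and> bilin_on Q (dual Q) (\<lambda>Y \<Phi>. g2 i (sig Y) (rho \<Phi>))"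
    using c2 lin_sig bilin1 by blast
  have d3: "\<forall>i<n3. lin_on (dual Q) (\<lambda>\<Phi>. f3 i (rho \<Phi>)) \<and> bilin_on Q Q (\<lambda>X Y. g3 i (sig X) (sig Y))"
    using c3 lin_rho bilin3 by blast
  have e: "\<forall>X\<in>vcar Q. \<forall>Y\<in>vcar Q. \<forall>\<Phi>\<in>vcar (dual Q).
           \<Phi> (quot_mult I X Y) = (\<Sum>i<n1. f1 i (sig X) * g1 i (sig Y) (rho \<Phi>))
               + (\<Sum>i<n2. f2 i (sig Y) * g2 i (sig X) (rho \<Phi>))
               + (\<Sum>i<n3. f3 i (rho \<Phi>) * g3 i (sig X) (sig Y))"
  proof (intro ballI)
    fix X Y \<Phi> assume X: "X \<in> vcar Q" and Y: "Y \<in> vcar Q" and P: "\<Phi> \<in> vcar (dual Q)"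
    have "\<Phi> (quot_mult I X Y) = \<Phi> (quot_mult I (cls (sig X)) (cls (sig Y)))"
      using cls_sig[OF X] cls_sig[OF Y] by simp
    also have "\<dots> = rho \<Phi> (sig X * sig Y)" unfolding multQ rho_def ..
    also have "\<dots> = (\<Sum>i<n1. f1 i (sig X) * g1 i (sig Y) (rho \<Phi>))
               + (\<Sum>i<n2. f2 i (sig Y) * g2 i (sig X) (rho \<Phi>))
               + (\<Sum>i<n3. f3 i (rho \<Phi>) * g3 i (sig X) (sig Y))"
      using eq rho_dual[OF P] by (simp add: AA_simps)
    finally show "\<Phi> (quot_mult I X Y) = (\<Sum>i<n1. f1 i (sig X) * g1 i (sig Y) (rho \<Phi>))
               + (\<Sum>i<n2. f2 i (sig Y) * g2 i (sig X) (rho \<Phi>))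
               + (\<Sum>i<n3. f3 i (rho \<Phi>) * g3 i (sig X) (sig Y))" .
  qed
  show ?thesis unfolding slice_rank_le_def
    apply (rule exI[of _ n1], rule exI[of _ n2], rule exI[of _ n3])
    apply (rule exI[of _ "\<lambda>i X. f1 i (sig X)"], rule exI[of _ "\<lambda>i Y \<Phi>. g1 i (sig Y) (rho \<Phi>)"])
    apply (rule exI[of _ "\<lambda>i X. f2 i (sig X)"], rule exI[of _ "\<lambda>i Y \<Phi>. g2 i (sig Y) (rho \<Phi>)"])
    apply (rule exI[of _ "\<lambda>i \<Phi>. f3 i (rho \<Phi>)"], rule exI[of _ "\<lambda>i X Y. g3 i (sig X) (sig Y)"])
    using hn d1 d2 d3 e by simp
qed

end


lemma lin_sum:
  fixes s :: "'k::field \<Rightarrow> 'a::ring \<Rightarrow> 'a"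
  assumes L: "lin_on (alg_space s) \<phi>" and F: "finite F"
  shows "\<phi> (sum g F) = (\<Sum>i\<in>F. \<phi> (g i))"
proof -
  have La: "\<phi> (x + y) = \<phi> x + \<phi> y" for x y
    using L unfolding lin_on_def alg_space_def vcar_def vadd_def by auto
  have "\<phi> 0 + 0 = \<phi> 0 + \<phi> 0" using La[of 0 0] by (metis add.right_neutral)
  hence z: "\<phi> 0 = 0" by (metis add_left_imp_eq)
  show ?thesis using F by (induction F rule: finite_induct) (simp_all add: z La)
qed

lemma A_decomp:
  fixes s :: "'k::field \<Rightarrow> 'a::ring \<Rightarrow> 'a"
  assumes fd: "finite_dimensional_vector_space s Bs"
    and comm: "\<forall>c x y. s c (x * y) = s c x * y \<and> s c (x * y) = x * s c y"
  shows "slice_rank_le (alg_space s) (alg_space s) (dual (alg_space s)) (\<lambda>x y \<phi>. \<phi> (x * y)) (card Bs)"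
proof -
  interpret finite_dimensional_vector_space s Bs by (rule fd)
  have AS: "vcar (alg_space s) = UNIV" "vadd (alg_space s) = (+)" "vscale (alg_space s) = s"
    unfolding alg_space_def vcar_def vadd_def vscale_def by simp_all
  have DS: "vcar (dual V) = {f. lin_on V f \<and> (\<forall>x. x \<notin> vcar V \<longrightarrow> f x = 0)}"
    "vadd (dual V) = (\<lambda>f g x. f x + g x)" "vscale (dual V) = (\<lambda>c f x. c * f x)" for V :: "('k, 'a) vsp"
    unfolding dual_def vcar_def vadd_def vscale_def by simp_all
  obtain h where h: "bij_betw h {0..<card Bs} Bs" using ex_bij_betw_nat_finite[OF finite_Basis] by blast
  define f1 where "f1 i x = representation Bs x (h i)" for i x
  define g1 where "g1 i y \<phi> = \<phi> (h i * y)" for i y and \<phi> :: "'a \<Rightarrow> 'k"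
  have c2: "x * s c y = s c (x * y)" for x y c using comm by metis
  have sp: "x \<in> span Bs" for x using span_Basis by simp
  have lf: "lin_on (alg_space s) (f1 i)" for i
    unfolding lin_on_def AS f1_def
    using representation_add[OF independent_Basis sp sp] representation_scale[OF independent_Basis sp]
    by simp
  have lphi: "\<phi> (x + y) = \<phi> x + \<phi> y" "\<phi> (s c x) = c * \<phi> x"
    if "\<phi> \<in> vcar (dual (alg_space s))" for \<phi> x y c
    using that unfolding DS AS lin_on_def by auto
  have bg: "bilin_on (alg_space s) (dual (alg_space s)) (g1 i)" for i
    unfolding bilin_on_def
  proof (intro conjI ballI)
    fix \<phi> assume P: "\<phi> \<in> vcar (dual (alg_space s))"
    show "lin_on (alg_space s) (\<lambda>x. g1 i x \<phi>)"
      unfolding lin_on_def AS g1_def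
      using lphi[OF P] c2 by (simp add: distrib_left)
  next
    fix y show "lin_on (dual (alg_space s)) (g1 i y)"
      unfolding lin_on_def DS g1_def by simp
  qed
  have eq: "\<phi> (x * y) = (\<Sum>i<card Bs. f1 i x * g1 i y \<phi>)"
    if P: "\<phi> \<in> vcar (dual (alg_space s))" for x y \<phi>
  proof -
    have L: "lin_on (alg_space s) \<phi>" using P unfolding DS by simp
    have "x = (\<Sum>b\<in>Bs. s (representation Bs x b) b)"
      using sum_representation_eq[OF independent_Basis sp finite_Basis order_refl] by simp
    hence "x * y = (\<Sum>b\<in>Bs. s (representation Bs x b) b * y)"
      by (metis sum_distrib_right)
    also have "\<dots> = (\<Sum>b\<in>Bs. s (representation Bs x b) (b * y))" using comm by simp
    finally have "\<phi> (x * y) = (\<Sum>b\<in>Bs. \<phi> (s (representation Bs x b) (b * y)))"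
      using lin_sum[OF L finite_Basis] by simp
    also have "\<dots> = (\<Sum>b\<in>Bs. representation Bs x b * \<phi> (b * y))"
      using lphi(2)[OF P] by simp
    also have "\<dots> = (\<Sum>i\<in>{0..<card Bs}. representation Bs x (h i) * \<phi> (h i * y))"
      using sum.reindex_bij_betw[OF h, of "\<lambda>b. representation Bs x b * \<phi> (b * y)"] by simp
    finally show ?thesis unfolding f1_def g1_def by (simp add: atLeast0LessThan)
  qed
  show ?thesis unfolding slice_rank_le_def
    apply (rule exI[of _ "card Bs"], rule exI[of _ 0], rule exI[of _ 0])
    apply (rule exI[of _ f1], rule exI[of _ g1])
    using lf bg eq by (simp add: AS)
qed

theorem lemma2p2:
  fixes s :: "'k::field \<Rightarrow> 'a::ring \<Rightarrow> 'a" and I :: "'a set"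
  assumes "fd_algebra s"
    and "two_sided_ideal s I"
  shows "SR_quot s I \<le> SR s"
proof -
  obtain Bs where fd: "finite_dimensional_vector_space s Bs"
    and comm: "\<forall>c x y. s c (x * y) = s c x * y \<and> s c (x * y) = x * s c y"
    using assms(1) unfolding fd_algebra_def by blast
  have vs: "vector_space s" using fd unfolding finite_dimensional_vector_space_def by blast
  have sub: "module.subspace s I" using assms(2) unfolding two_sided_ideal_def by blast
  obtain p where p: "\<forall>x y. p (x + y) = p x + p y" "\<forall>c x. p (s c x) = s c (p x)"
           "\<forall>x\<in>I. p x = 0" "\<forall>a. a - p a \<in> I"
    using proj_exists[OF vs sub] by blast
  interpret qctx s I p
    by (rule qctx.intro[OF vs], unfold_locales) (use p assms(2) in auto)
  let ?T = "\<lambda>x y \<phi>. \<phi> (x * y)"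
  have ex: "\<exists>r. slice_rank_le (alg_space s) (alg_space s) (dual (alg_space s)) ?T r"
    using A_decomp[OF fd comm] by blast
  have m: "slice_rank_le (alg_space s) (alg_space s) (dual (alg_space s)) ?T (SR s)"
    unfolding SR_def SR_alg_def slice_rank_def by (rule LeastI_ex[OF ex])
  have "slice_rank_le (quot_space s I) (quot_space s I) (dual (quot_space s I))
          (\<lambda>X Y \<Phi>. \<Phi> (quot_mult I X Y)) (SR s)"
    by (rule quot_decomp[OF m])
  thus ?thesis unfolding SR_quot_def SR_alg_def slice_rank_def by (rule Least_le)
qed

end
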